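(* Let $p_{\rm data}$ be a probability density on $\mathbb{R}^d$, $\gamma=\mathcal{N}(0,I_d)$, and $\Phi:\mathbb{R}^d\to\mathbb{R}^d$ a measurable one-to-one map with $\Phi_\#\gamma$ having a density. Fix $y$ and a measurable likelihood $x_0\mapsto p(y\mid x_0)\ge0$ with $\sup_{x_0}p(y\mid x_0)<\infty$, $Z_y:=\int p(y\mid x)p_{\rm data}(x)dx>0$ and $\int p(y\mid x)\Phi_\#\gamma(x)dx>0$. Let $p_{0,y}\propto p(y\mid x_0)p_{\rm data}(x_0)$ be the true posterior, let $\tilde p_{1,y}(x_1)\propto p(y\mid\Phi(x_1))\gamma(x_1)$ be the noise-space model posterior, and let $\tilde p_{1,y}^S$ be any probability distribution on $\mathbb{R}^d$; set $\tilde p_{0,y}^S:=\Phi_\#\tilde p_{1,y}^S$. If $\mathrm{TV}(p_{\rm data},\Phi_\#\gamma)\le\varepsilon$ and $\mathrm{TV}(\tilde p_{1,y},\tilde p_{1,y}^S)\le\varepsilon_S$, then $$\mathrm{TV}(p_{0,y},\tilde p_{0,y}^S)\le 2\kappa_y\varepsilon+\varepsilon_S,\qquad \kappa_y:=\frac{\sup_{x_0}p(y\mid x_0)}{\int p(y\mid x)p_{\rm data}(x)\,dx}.$$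
   Context: $\propto$ denotes equality up to a normalizing constant making the density integrate to one. For a measurable map $T$ and distribution $P$, $T_\#P(A)=P(T^{-1}A)$ is the push-forward. $\mathrm{TV}(P,Q)=\sup_A|P(A)-Q(A)|$, equal to $\frac12\int|p-q|$ for densities. Note $\Phi_\#\tilde p_{1,y}$ is the model posterior $\propto p(y\mid x_0)\Phi_\#\gamma(x_0)$. *)

theory Defs
  imports "HOL-Probability.Probability"
begin

definition gauss_dens :: "real ^ 'd \<Rightarrow> real" where
  "gauss_dens x = (\<Prod>i\<in>UNIV. std_normal_density (x $ i))"

definition tv_dist :: "'a measure \<Rightarrow> 'a measure \<Rightarrow> real" where
  "tv_dist P Q = (SUP A\<in>sets P. \<bar>measure P A - measure Q A\<bar>)"

end

theory Submission imports Defs begin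

lemma gauss_meas: "gauss_dens \<in> borel_measurable borel"
  unfolding gauss_dens_def by measurable

lemma gauss_nonneg: "gauss_dens x \<ge> 0"
  unfolding gauss_dens_def by (auto intro!: prod_nonneg normal_density_nonneg)

lemma std_nn: "(\<integral>\<^sup>+x. ennreal (std_normal_density x) \<partial>lborel) = 1"
proof -
  interpret prob_space "density lborel (\<lambda>x. ennreal (std_normal_density x))"
    by (rule prob_space_normal_density) simp
  show ?thesis using emeasure_space_1 by (simp add: emeasure_density)
qed

lemma gauss_nn: "(\<integral>\<^sup>+x. ennreal (gauss_dens x) \<partial>(lborel :: (real^'d) measure)) = 1"
proof -
  have eq: "ennreal (gauss_dens x) = (\<Prod>b\<in>Basis. ennreal (std_normal_density (x \<bullet> b)))" for x :: "real^'d"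
  proof -
    have "(\<Prod>b\<in>Basis. ennreal (std_normal_density (x \<bullet> b))) = ennreal (\<Prod>b\<in>Basis. std_normal_density (x \<bullet> b))"
      by (rule prod_ennreal) (simp add: normal_density_nonneg)
    also have "(\<Prod>b\<in>Basis. std_normal_density (x \<bullet> b)) = (\<Prod>i\<in>UNIV. std_normal_density (x $ i))"
    proof -
      have "Basis = (\<lambda>i. axis i (1::real)) ` (UNIV :: 'd set)"
        unfolding Basis_vec_def by auto
      moreover have "inj (\<lambda>i. axis i (1::real) :: real^'d)"
        by (auto simp: inj_def axis_eq_axis)
      ultimately have "(\<Prod>b\<in>Basis. std_normal_density (x \<bullet> b)) = (\<Prod>i\<in>UNIV. std_normal_density (x \<bullet> axis i (1::real)))"
        using prod.reindex[of "\<lambda>i. axis i (1::real) :: real^'d" UNIV "\<lambda>b. std_normal_density (x \<bullet> b)"]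
        by (simp add: comp_def)
      then show ?thesis by (simp add: inner_axis)
    qed
    finally show ?thesis unfolding gauss_dens_def by simp
  qed
  have "(\<integral>\<^sup>+x. ennreal (gauss_dens x) \<partial>(lborel :: (real^'d) measure)) =
     (\<integral>\<^sup>+x. (\<Prod>b\<in>(Basis::(real^'d) set). ennreal (std_normal_density (x \<bullet> b))) \<partial>lborel)"
    by (simp add: eq)
  also have "\<dots> = (\<Prod>b\<in>(Basis :: (real^'d) set). (\<integral>\<^sup>+x. ennreal (std_normal_density x) \<partial>lborel))"
    by (rule nn_integral_lborel_prod) auto
  also have "\<dots> = 1" by (simp add: std_nn)
  finally show ?thesis .
qed

lemma dens_finite:
  fixes f :: "'a::euclidean_space \<Rightarrow> real"
  assumes "f \<in> borel_measurable borel" "\<And>x. f x \<ge> 0" "integrable lborel f"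
  shows "finite_measure (density lborel (\<lambda>x. ennreal (f x)))"
proof
  have "emeasure (density lborel (\<lambda>x. ennreal (f x))) (space (density lborel (\<lambda>x. ennreal (f x))))
     = (\<integral>\<^sup>+x. ennreal (f x) \<partial>lborel)"
    by (simp add: emeasure_density assms)
  also have "\<dots> = ennreal (LINT x|lborel. f x)"
    using assms by (intro nn_integral_eq_integral) auto
  finally show "emeasure (density lborel (\<lambda>x. ennreal (f x))) (space (density lborel (\<lambda>x. ennreal (f x)))) \<noteq> \<infinity>"
    by simp
qed

lemma dens_measure:
  fixes f :: "'a::euclidean_space \<Rightarrow> real"
  assumes "f \<in> borel_measurable borel" "\<And>x. f x \<ge> 0" "integrable lborel f" "A \<in> sets borel"
  shows "measure (density lborel (\<lambda>x. ennreal (f x))) A = (LINT x|lborel. indicator A x * f x)"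
proof -
  have int: "integrable lborel (\<lambda>x. indicator A x * f x)"
    using integrable_mult_indicator[of A lborel f] assms by simp
  have "emeasure (density lborel (\<lambda>x. ennreal (f x))) A = (\<integral>\<^sup>+x. ennreal (f x) * indicator A x \<partial>lborel)"
    using assms by (simp add: emeasure_density)
  also have "\<dots> = (\<integral>\<^sup>+x. ennreal (indicator A x * f x) \<partial>lborel)"
    by (intro nn_integral_cong) (auto simp: indicator_def)
  also have "\<dots> = ennreal (LINT x|lborel. indicator A x * f x)"
    using assms int by (intro nn_integral_eq_integral) auto
  finally show ?thesis unfolding measure_def using assms
    by (simp add: integral_nonneg_AE)
qed

lemma tv_ge:
  assumes "finite_measure P" "finite_measure Q" "A \<in> sets P"
  shows "\<bar>measure P A - measure Q A\<bar> \<le> tv_dist P Q"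
  unfolding tv_dist_def
proof (rule cSUP_upper[OF assms(3)])
  show "bdd_above ((\<lambda>A. \<bar>measure P A - measure Q A\<bar>) ` sets P)"
  proof (rule bdd_aboveI2)
    fix B
    have "measure P B \<le> measure P (space P)" "measure Q B \<le> measure Q (space Q)"
      using assms by (auto intro: finite_measure.bounded_measure)
    moreover have "0 \<le> measure P B" "0 \<le> measure Q B" by auto
    ultimately show "\<bar>measure P B - measure Q B\<bar> \<le> measure P (space P) + measure Q (space Q)"
      by linarith
  qed
qed

lemma key:
  fixes f1 f2 h :: "'a::euclidean_space \<Rightarrow> real"
  assumes m: "f1 \<in> borel_measurable borel" "f2 \<in> borel_measurable borel" "h \<in> borel_measurable borel"
    and nn: "\<And>x. f1 x \<ge> 0" "\<And>x. f2 x \<ge> 0"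
    and i: "integrable lborel f1" "integrable lborel f2"
    and hb: "\<And>x. 0 \<le> h x" "\<And>x. h x \<le> M"
    and tv: "\<And>B. B \<in> sets borel \<Longrightarrow> (LINT x|lborel. indicator B x * f1 x) - (LINT x|lborel. indicator B x * f2 x) \<le> \<epsilon>"
  shows "(LINT x|lborel. h x * (f1 x - f2 x)) \<le> M * \<epsilon>"
proof -
  define B where "B = {x. f2 x < f1 x}"
  have Bs: "B \<in> sets borel" unfolding B_def using m by measurable
  have i1: "integrable lborel (\<lambda>x. indicator B x * f1 x)" "integrable lborel (\<lambda>x. indicator B x * f2 x)"
    using integrable_mult_indicator[of B lborel f1] integrable_mult_indicator[of B lborel f2] i Bs by simp_all
  have ib: "integrable lborel (\<lambda>x. M * (f1 x + f2 x))" using i by auto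
  have ae: "AE x in lborel. norm (h x * (f1 x - f2 x)) \<le> norm (M * (f1 x + f2 x))"
  proof (rule AE_I2)
    fix x
    have M0: "0 \<le> M" using hb[of x] by linarith
    have "\<bar>h x * (f1 x - f2 x)\<bar> = h x * \<bar>f1 x - f2 x\<bar>" using hb by (simp add: abs_mult)
    also have "\<dots> \<le> M * (f1 x + f2 x)"
      using hb[of x] nn[of x] by (intro mult_mono) auto
    finally show "norm (h x * (f1 x - f2 x)) \<le> norm (M * (f1 x + f2 x))"
      using M0 nn[of x] by simp
  qed
  have hm: "(\<lambda>x. h x * (f1 x - f2 x)) \<in> borel_measurable lborel" using m by measurable
  have ih: "integrable lborel (\<lambda>x. h x * (f1 x - f2 x))"
    by (rule Bochner_Integration.integrable_bound[OF ib hm ae])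
  have "(LINT x|lborel. h x * (f1 x - f2 x)) \<le> (LINT x|lborel. M * (indicator B x * f1 x - indicator B x * f2 x))"
  proof (rule integral_mono[OF ih])
    show "integrable lborel (\<lambda>x. M * (indicator B x * f1 x - indicator B x * f2 x))" using i1 by auto
    fix x
    show "h x * (f1 x - f2 x) \<le> M * (indicator B x * f1 x - indicator B x * f2 x)"
    proof (cases "x \<in> B")
      case True then show ?thesis using hb[of x] by (auto simp: B_def intro: mult_right_mono)
    next
      case False then have "f1 x - f2 x \<le> 0" by (auto simp: B_def)
      then show ?thesis using hb[of x] False by (simp add: mult_nonneg_nonpos)
    qed
  qed
  also have "\<dots> = M * ((LINT x|lborel. indicator B x * f1 x) - (LINT x|lborel. indicator B x * f2 x))"
    using i1 by simp
  also have "\<dots> \<le> M * \<epsilon>"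
    using tv[OF Bs] hb by (meson mult_left_mono order_trans)
  finally show ?thesis .
qed

lemma int_bdd_mult:
  fixes f h :: "'a::euclidean_space \<Rightarrow> real"
  assumes "integrable lborel f" "\<And>x. f x \<ge> 0" "h \<in> borel_measurable borel" "f \<in> borel_measurable borel"
    "\<And>x. 0 \<le> h x" "\<And>x. h x \<le> M"
  shows "integrable lborel (\<lambda>x. h x * f x)"
proof -
  have ib: "integrable lborel (\<lambda>x. M * f x)" using assms by auto
  have ae: "AE x in lborel. norm (h x * f x) \<le> norm (M * f x)"
  proof (rule AE_I2)
    fix x
    have M0: "0 \<le> M" using assms(5,6)[of x] by linarith
    have "h x * f x \<le> M * f x" using assms by (intro mult_right_mono) auto
    then show "norm (h x * f x) \<le> norm (M * f x)" using M0 assms(2,5)[of x] by simp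
  qed
  have hm: "(\<lambda>x. h x * f x) \<in> borel_measurable lborel" using assms by measurable
  show ?thesis by (rule Bochner_Integration.integrable_bound[OF ib hm ae])
qed

lemma arith_tv:
  fixes a b Z Z' e :: real
  assumes "Z > 0" "Z' > 0" "0 \<le> b" "b \<le> Z'" "\<bar>a - b\<bar> \<le> e" "\<bar>Z - Z'\<bar> \<le> e"
  shows "\<bar>a / Z - b / Z'\<bar> \<le> 2 * e / Z"
proof -
  have eq: "a / Z - b / Z' = (a - b) / Z + (b / Z') * (Z' - Z) / Z"
    using assms by (simp add: field_simps)
  have "\<bar>(b / Z') * (Z' - Z) / Z\<bar> = (b / Z') * \<bar>Z' - Z\<bar> / Z"
    using assms by (simp add: abs_mult)
  also have "\<dots> \<le> 1 * \<bar>Z' - Z\<bar> / Z"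
    using assms by (intro divide_right_mono mult_right_mono) auto
  also have "\<dots> \<le> e / Z" using assms by (intro divide_right_mono) auto
  finally have 1: "\<bar>(b / Z') * (Z' - Z) / Z\<bar> \<le> e / Z" .
  have 2: "\<bar>(a - b) / Z\<bar> \<le> e / Z" using assms by (simp add: divide_right_mono)
  have "\<bar>(a - b) / Z + (b / Z') * (Z' - Z) / Z\<bar> \<le> \<bar>(a - b) / Z\<bar> + \<bar>(b / Z') * (Z' - Z) / Z\<bar>"
    by (rule abs_triangle_ineq)
  moreover have "e / Z + e / Z = 2 * e / Z" by simp
  ultimately show ?thesis unfolding eq using 1 2 by linarith
qed

theorem corollary1:
  fixes p_data :: "real ^ 'd \<Rightarrow> real"
    and \<Phi> :: "real ^ 'd \<Rightarrow> real ^ 'd"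
    and L :: "real ^ 'd \<Rightarrow> real"
    and Q :: "(real ^ 'd) measure"
    and \<epsilon> \<epsilon>S :: real
  assumes pdata_meas: "p_data \<in> borel_measurable borel"
    and pdata_nonneg: "\<And>x. p_data x \<ge> 0"
    and pdata_int: "integrable lborel p_data"
    and pdata_one: "(LINT x|lborel. p_data x) = 1"
    and Phi_meas: "\<Phi> \<in> borel_measurable borel"
    and Phi_inj: "inj \<Phi>"
    and Phi_dens: "\<exists>g. g \<in> borel_measurable borel \<and> (\<forall>x. g x \<ge> 0) \<and>
         distr (density lborel (\<lambda>x. ennreal (gauss_dens x))) borel \<Phi> = density lborel (\<lambda>x. ennreal (g x))"
    and L_meas: "L \<in> borel_measurable borel"
    and L_nonneg: "\<And>x. L x \<ge> 0"
    and L_bdd: "bdd_above (range L)"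
    and Z_pos: "(LINT x|lborel. L x * p_data x) > 0"
    and model_pos: "(LINT x|distr (density lborel (\<lambda>x. ennreal (gauss_dens x))) borel \<Phi>. L x) > 0"
    and Q_prob: "prob_space Q"
    and Q_sets: "sets Q = sets borel"
    and tv_prior: "tv_dist (density lborel (\<lambda>x. ennreal (p_data x)))
                     (distr (density lborel (\<lambda>x. ennreal (gauss_dens x))) borel \<Phi>) \<le> \<epsilon>"
    and tv_sampler: "tv_dist
          (density lborel (\<lambda>x1. ennreal (L (\<Phi> x1) * gauss_dens x1
               / (LINT u|lborel. L (\<Phi> u) * gauss_dens u))))
          Q \<le> \<epsilon>S"
  shows "tv_dist
          (density lborel (\<lambda>x0. ennreal (L x0 * p_data x0 / (LINT x|lborel. L x * p_data x))))
          (distr Q borel \<Phi>)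
         \<le> 2 * (Sup (range L) / (LINT x|lborel. L x * p_data x)) * \<epsilon> + \<epsilon>S"
proof -
  note [measurable] = pdata_meas Phi_meas L_meas gauss_meas
  define G :: "(real^'d) measure" where "G = density lborel (\<lambda>x. ennreal (gauss_dens x))"
  obtain g where gm[measurable]: "g \<in> borel_measurable borel" and gnn: "\<And>x. g x \<ge> 0"
    and Gp: "distr G borel \<Phi> = density lborel (\<lambda>x. ennreal (g x))"
    using Phi_dens unfolding G_def by blast
  define Mx where "Mx = Sup (range L)"
  have LM: "L x \<le> Mx" for x unfolding Mx_def using L_bdd by (intro cSup_upper) auto
  have M0: "0 \<le> Mx" using LM[of 0] L_nonneg[of 0] by linarith
  define Z where "Z = (LINT x|lborel. L x * p_data x)"
  define Z' where "Z' = (LINT x|distr G borel \<Phi>. L x)"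
  have Zp: "Z > 0" using Z_pos Z_def by simp
  have Z'p: "Z' > 0" using model_pos Z'_def G_def by simp
  have PhiG[measurable]: "\<Phi> \<in> measurable G borel" unfolding G_def by simp
  have gint: "integrable lborel gauss_dens"
    by (rule integrableI_nonneg) (auto simp: gauss_nonneg gauss_nn)
  have "(\<integral>\<^sup>+x. ennreal (g x) \<partial>lborel) = emeasure (density lborel (\<lambda>x. ennreal (g x))) UNIV"
    by (simp add: emeasure_density)
  also have "\<dots> = emeasure G UNIV"
    unfolding Gp[symmetric] by (subst emeasure_distr) (auto simp: G_def)
  also have "\<dots> = 1" unfolding G_def by (simp add: emeasure_density gauss_nn)
  finally have gnn1: "(\<integral>\<^sup>+x. ennreal (g x) \<partial>lborel) = 1" .
  have gint2: "integrable lborel g"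
    by (rule integrableI_nonneg) (auto simp: gnn gnn1)
  have T: "(LINT u|lborel. gauss_dens u * k (\<Phi> u)) = (LINT x|lborel. g x * k x)"
    if [measurable]: "k \<in> borel_measurable borel" for k :: "real^'d \<Rightarrow> real"
  proof -
    have "(LINT u|lborel. gauss_dens u * k (\<Phi> u)) = (LINT u|G. k (\<Phi> u))"
      unfolding G_def by (subst integral_density) (auto simp: gauss_nonneg)
    also have "\<dots> = (LINT x|distr G borel \<Phi>. k x)"
      by (subst integral_distr) auto
    also have "\<dots> = (LINT x|lborel. g x * k x)"
      unfolding Gp by (subst integral_density) (auto simp: gnn)
    finally show ?thesis .
  qed
  have Z'eq: "Z' = (LINT x|lborel. g x * L x)"
    unfolding Z'_def Gp by (subst integral_density) (auto simp: gnn)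
  define Z1 where "Z1 = (LINT u|lborel. L (\<Phi> u) * gauss_dens u)"
  have "Z1 = (LINT u|lborel. gauss_dens u * L (\<Phi> u))" unfolding Z1_def by (simp add: mult.commute)
  then have Z1eq: "Z1 = Z'" using T[of L] Z'eq by simp
  have Z1p: "Z1 > 0" using Z1eq Z'p by simp
  have iLp: "integrable lborel (\<lambda>x. h x * p_data x)"
    if "h \<in> borel_measurable borel" "\<And>x. 0 \<le> h x" "\<And>x. h x \<le> Mx" for h
    using that by (intro int_bdd_mult[OF pdata_int pdata_nonneg]) auto
  have iLg: "integrable lborel (\<lambda>x. h x * g x)"
    if "h \<in> borel_measurable borel" "\<And>x. 0 \<le> h x" "\<And>x. h x \<le> Mx" for h
    using that by (intro int_bdd_mult[OF gint2 gnn]) auto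
  have iLG: "integrable lborel (\<lambda>x. L (\<Phi> x) * gauss_dens x)"
    by (rule int_bdd_mult[OF gint gauss_nonneg, where M=Mx]) (auto simp: LM L_nonneg)
  define Pd where "Pd = density lborel (\<lambda>x. ennreal (p_data x))"
  have finPd: "finite_measure Pd" unfolding Pd_def
    by (rule dens_finite) (auto simp: pdata_nonneg pdata_int)
  have finGp: "finite_measure (distr G borel \<Phi>)" unfolding Gp
    by (rule dens_finite) (auto simp: gnn gint2)
  have tvB: "\<bar>(LINT x|lborel. indicator B x * p_data x) - (LINT x|lborel. indicator B x * g x)\<bar> \<le> \<epsilon>"
    if B: "B \<in> sets borel" for B
  proof -
    have "\<bar>measure Pd B - measure (distr G borel \<Phi>) B\<bar> \<le> \<epsilon>"
      using tv_ge[OF finPd finGp, of B] B tv_prior unfolding Pd_def G_def by simp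
    moreover have "measure Pd B = (LINT x|lborel. indicator B x * p_data x)"
      unfolding Pd_def by (rule dens_measure) (auto simp: pdata_nonneg pdata_int B)
    moreover have "measure (distr G borel \<Phi>) B = (LINT x|lborel. indicator B x * g x)"
      unfolding Gp by (rule dens_measure) (auto simp: gnn gint2 B)
    ultimately show ?thesis by simp
  qed
  have diffb: "\<bar>(LINT x|lborel. h x * p_data x) - (LINT x|lborel. h x * g x)\<bar> \<le> Mx * \<epsilon>"
    if hm[measurable]: "h \<in> borel_measurable borel" and h0: "\<And>x. 0 \<le> h x" and h1: "\<And>x. h x \<le> Mx" for h
  proof -
    have e1: "(LINT x|lborel. h x * p_data x) - (LINT x|lborel. h x * g x) = (LINT x|lborel. h x * (p_data x - g x))"
      using iLp[OF hm h0 h1] iLg[OF hm h0 h1] by (simp add: right_diff_distrib)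
    have e2: "(LINT x|lborel. h x * g x) - (LINT x|lborel. h x * p_data x) = (LINT x|lborel. h x * (g x - p_data x))"
      using iLp[OF hm h0 h1] iLg[OF hm h0 h1] by (simp add: right_diff_distrib)
    have "(LINT x|lborel. h x * (p_data x - g x)) \<le> Mx * \<epsilon>"
      by (rule key) (use tvB pdata_nonneg gnn pdata_int gint2 h0 h1 in \<open>auto simp: abs_le_iff\<close>)
    moreover have "(LINT x|lborel. h x * (g x - p_data x)) \<le> Mx * \<epsilon>"
      by (rule key) (use tvB pdata_nonneg gnn pdata_int gint2 h0 h1 in \<open>auto simp: abs_le_iff\<close>)
    ultimately show ?thesis using e1 e2 by linarith
  qed
  define P1 where "P1 = density lborel (\<lambda>x1. ennreal (L (\<Phi> x1) * gauss_dens x1 / Z1))"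
  have finP1: "finite_measure P1" unfolding P1_def
    by (rule dens_finite) (use iLG L_nonneg gauss_nonneg Z1p in \<open>auto intro!: divide_nonneg_pos mult_nonneg_nonneg\<close>)
  have finQ: "finite_measure Q" using Q_prob by (simp add: prob_space_def)
  have PhiQ[measurable]: "\<Phi> \<in> measurable Q borel"
    using Phi_meas measurable_cong_sets[OF Q_sets refl] by blast
  have spQ: "space Q = UNIV" using sets_eq_imp_space_eq[OF Q_sets] by simp
  show ?thesis
    unfolding tv_dist_def
  proof (rule cSUP_least)
    show "sets (density lborel (\<lambda>x0. ennreal (L x0 * p_data x0 / (LINT x|lborel. L x * p_data x)))) \<noteq> {}"
      by auto
    fix A assume "A \<in> sets (density lborel (\<lambda>x0. ennreal (L x0 * p_data x0 / (LINT x|lborel. L x * p_data x))))"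
    then have A[measurable]: "A \<in> sets borel" by simp
    have PhiA: "\<Phi> -` A \<in> sets borel" using measurable_sets[OF Phi_meas A] by simp
    define a where "a = (LINT x|lborel. indicator A x * L x * p_data x)"
    define b where "b = (LINT x|lborel. indicator A x * L x * g x)"
    have hA: "(\<lambda>x. indicator A x * L x) \<in> borel_measurable borel" by measurable
    have hA0: "\<And>x. 0 \<le> indicator A x * L x" using L_nonneg by simp
    have hA1: "\<And>x. indicator A x * L x \<le> Mx" using LM L_nonneg M0 by (simp add: indicator_def)
    have m0: "measure (density lborel (\<lambda>x0. ennreal (L x0 * p_data x0 / (LINT x|lborel. L x * p_data x)))) A = a / Z"
    proof -
      have "measure (density lborel (\<lambda>x0. ennreal (L x0 * p_data x0 / Z))) A
          = (LINT x|lborel. indicator A x * (L x * p_data x / Z))"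
        by (rule dens_measure) (use iLp[of L] LM L_nonneg pdata_nonneg Zp A in \<open>auto\<close>)
      also have "\<dots> = (LINT x|lborel. indicator A x * L x * p_data x / Z)"
        by (simp add: mult.assoc)
      also have "\<dots> = a / Z" unfolding a_def by simp
      finally show ?thesis unfolding Z_def .
    qed
    have m1: "measure P1 (\<Phi> -` A) = b / Z'"
    proof -
      have "measure P1 (\<Phi> -` A) = (LINT x|lborel. indicator (\<Phi> -` A) x * (L (\<Phi> x) * gauss_dens x / Z1))"
        unfolding P1_def
        by (rule dens_measure) (use iLG L_nonneg gauss_nonneg Z1p in \<open>auto simp: PhiA intro!: divide_nonneg_pos mult_nonneg_nonneg\<close>)
      also have "\<dots> = (LINT x|lborel. gauss_dens x * (indicator A (\<Phi> x) * L (\<Phi> x))) / Z1"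
        by (simp add: indicator_def mult_ac)
      also have "\<dots> = (LINT x|lborel. g x * (indicator A x * L x)) / Z1"
        using T[OF hA] by simp
      also have "\<dots> = b / Z'" unfolding b_def Z1eq by (simp add: mult_ac)
      finally show ?thesis .
    qed
    have mQ: "measure (distr Q borel \<Phi>) A = measure Q (\<Phi> -` A)"
      by (subst measure_distr) (auto simp: spQ)
    have samp: "\<bar>measure P1 (\<Phi> -` A) - measure Q (\<Phi> -` A)\<bar> \<le> \<epsilon>S"
      using tv_ge[OF finP1 finQ, of "\<Phi> -` A"] tv_sampler unfolding P1_def Z1_def
      by (simp add: PhiA)
    have ab: "\<bar>a - b\<bar> \<le> Mx * \<epsilon>"
      using diffb[OF hA hA0 hA1] unfolding a_def b_def by (simp add: mult_ac)
    have ZZ: "\<bar>Z - Z'\<bar> \<le> Mx * \<epsilon>"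
      using diffb[OF L_meas L_nonneg LM] unfolding Z_def Z'eq by (simp add: mult_ac)
    have b0: "0 \<le> b" unfolding b_def using L_nonneg gnn by (intro integral_nonneg_AE) auto
    have bZ: "b \<le> Z'" unfolding b_def Z'eq
      by (rule integral_mono) (use iLg[OF hA hA0 hA1] iLg[OF L_meas L_nonneg LM] L_nonneg gnn in
          \<open>auto simp: indicator_def mult_ac\<close>)
    have "\<bar>a / Z - b / Z'\<bar> \<le> 2 * (Mx * \<epsilon>) / Z"
      by (rule arith_tv) (use Zp Z'p b0 bZ ab ZZ in auto)
    then show "\<bar>measure (density lborel (\<lambda>x0. ennreal (L x0 * p_data x0 / (LINT x|lborel. L x * p_data x)))) A
        - measure (distr Q borel \<Phi>) A\<bar> \<le> 2 * (Sup (range L) / (LINT x|lborel. L x * p_data x)) * \<epsilon> + \<epsilon>S"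
      using m0 m1 mQ samp unfolding Mx_def[symmetric] Z_def[symmetric] by (simp add: field_simps)
  qed
qed

end
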